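(* Let $n\ge2$. Then $\mathcal{S}_n^\downarrow\subset\mathcal{S}_n$.
   Context: Let $\mathcal{C}$ be the set of smooth closed simple strictly convex (positive curvature) curves in $\mathbb{R}^2$, each parametrized by $\theta\in\mathbb{T}=\mathbb{R}/2\pi\mathbb{Z}$ so that the unit tangent at $C(\theta)$ is $(\cos\theta,\sin\theta)$, the outward normal is $\nu(\theta)=(\sin\theta,-\cos\theta)$, and $\rho(\theta)$ is the curvature there. Let $\Delta$ be the vertical axis, and $\mathcal{T}_n$ the set of closed curves symmetric with respect to $\Delta$ and invariant by the rotation of angle $2\pi/n$ about the origin. For $C\in\mathcal{C}\cap\mathcal{T}_n$ and $\theta\in(0,\pi/n]$, let $(0,\Pi(\theta))$ be the intersection point of the normal line to $C$ at $C(\theta)$ with $\Delta$ (with $\Pi(0)$ its limit as $\theta\searrow0$). Define $\mathcal{S}_n=\{C\in\mathcal{C}\cap\mathcal{T}_n:\ \Pi$ is increasing on $[0,\pi/n]\}$ and $\mathcal{S}_n^\downarrow=\{C\in\mathcal{C}\cap\mathcal{T}_n:\ \rho$ is decreasing on $[0,\pi/n]\}$. *)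

theory Defs
  imports "HOL-Analysis.Analysis"
begin

text \<open>The plane is identified with the complex numbers: the point (x,y) is x + i y.
  A curve is given by its tangent-angle parametrization C :: real \<Rightarrow> complex,
  2 pi-periodic in theta.\<close>

definition smooth_real :: "(real \<Rightarrow> real) \<Rightarrow> bool" where
  "smooth_real f \<longleftrightarrow> (\<forall>k x. ((deriv ^^ k) f) differentiable (at x))"

definition smooth_curve :: "(real \<Rightarrow> complex) \<Rightarrow> bool" where
  "smooth_curve C \<longleftrightarrow> smooth_real (\<lambda>t. Re (C t)) \<and> smooth_real (\<lambda>t. Im (C t))"

definition in_class_C :: "(real \<Rightarrow> complex) \<Rightarrow> bool" where
  "in_class_C C \<longleftrightarrow>
     smooth_curve C \<and>
     (\<forall>\<theta>. C (\<theta> + 2 * pi) = C \<theta>) \<and>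
     inj_on C {0..<2 * pi} \<and>
     (\<forall>\<theta>. \<exists>r>0. (C has_vector_derivative (of_real r * cis \<theta>)) (at \<theta>))"

text \<open>Curvature rho(theta): since |C'(theta)| is the radius of curvature, rho = 1/|C'|.\<close>
definition curvature :: "(real \<Rightarrow> complex) \<Rightarrow> real \<Rightarrow> real" where
  "curvature C \<theta> = 1 / norm (vector_derivative C (at \<theta>))"

definition curve_image :: "(real \<Rightarrow> complex) \<Rightarrow> complex set" where
  "curve_image C = C ` {0..2 * pi}"

definition in_T :: "nat \<Rightarrow> (real \<Rightarrow> complex) \<Rightarrow> bool" where
  "in_T n C \<longleftrightarrow>
     (\<lambda>z. - cnj z) ` curve_image C = curve_image C \<and>
     (\<lambda>z. cis (2 * pi / real n) * z) ` curve_image C = curve_image C"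

definition normal_vec :: "real \<Rightarrow> complex" where
  "normal_vec \<theta> = Complex (sin \<theta>) (- cos \<theta>)"

definition normal_axis_pt :: "(real \<Rightarrow> complex) \<Rightarrow> real \<Rightarrow> real" where
  "normal_axis_pt C \<theta> = (THE y. \<exists>t::real. C \<theta> + of_real t * normal_vec \<theta> = Complex 0 y)"

definition Pi_fun :: "(real \<Rightarrow> complex) \<Rightarrow> real \<Rightarrow> real" where
  "Pi_fun C \<theta> = (if \<theta> = 0 then Lim (at_right 0) (normal_axis_pt C) else normal_axis_pt C \<theta>)"

definition S_n :: "nat \<Rightarrow> (real \<Rightarrow> complex) set" where
  "S_n n = {C. in_class_C C \<and> in_T n C \<and>
     (\<forall>x\<in>{0..pi / real n}. \<forall>y\<in>{0..pi / real n}. x \<le> y \<longrightarrow> Pi_fun C x \<le> Pi_fun C y)}"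

definition S_n_down :: "nat \<Rightarrow> (real \<Rightarrow> complex) set" where
  "S_n_down n = {C. in_class_C C \<and> in_T n C \<and>
     (\<forall>x\<in>{0..pi / real n}. \<forall>y\<in>{0..pi / real n}. x \<le> y \<longrightarrow> curvature C y \<le> curvature C x)}"

end

theory Submission
  imports Defs
begin

lemma ReD: "(C has_vector_derivative v) (at t) \<Longrightarrow> ((\<lambda>x. Re (C x)) has_real_derivative Re v) (at t)"
  using bounded_linear.has_vector_derivative[OF bounded_linear_Re]
  by (simp add: has_real_derivative_iff_has_vector_derivative)
lemma ImD: "(C has_vector_derivative v) (at t) \<Longrightarrow> ((\<lambda>x. Im (C x)) has_real_derivative Im v) (at t)"
  using bounded_linear.has_vector_derivative[OF bounded_linear_Im]
  by (simp add: has_real_derivative_iff_has_vector_derivative)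
lemma P_deriv:
  assumes X: "(X has_real_derivative R * cos t) (at t)" and Y: "(Y has_real_derivative R * sin t) (at t)"
  and s: "sin t \<noteq> 0"
  shows "((\<lambda>u. Y u + X u * cos u / sin u) has_real_derivative (R * sin t - X t) / (sin t)^2) (at t)"
proof -
  have "((\<lambda>u. Y u + X u * cos u / sin u) has_real_derivative
     R * sin t + ((R * cos t * cos t + X t * (- sin t)) * sin t - X t * cos t * cos t) / (sin t * sin t)) (at t)"
    using X Y s by (auto intro!: derivative_eq_intros)
  moreover have "R * sin t + ((R * cos t * cos t + X t * (- sin t)) * sin t - X t * cos t * cos t) / (sin t * sin t)
     = (R * sin t - X t) / (sin t)^2"
    using s by (simp add: field_simps power2_eq_square) (insert sin_cos_squared_add[of t], algebra)
  ultimately show ?thesis by simp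
qed

theorem proposition5p2:
  fixes n :: nat
  assumes "n \<ge> 2"
  shows "S_n_down n \<subseteq> S_n n"
proof
  fix C assume "C \<in> S_n_down n"
  hence cC: "in_class_C C" and T: "in_T n C"
    and mono: "\<forall>x\<in>{0..pi / real n}. \<forall>y\<in>{0..pi / real n}. x \<le> y \<longrightarrow> curvature C y \<le> curvature C x"
    unfolding S_n_down_def by auto
  from cC have per: "\<And>t. C (t + 2 * pi) = C t"
    and dv: "\<forall>t. \<exists>r>0. (C has_vector_derivative (of_real r * cis t)) (at t)"
    unfolding in_class_C_def by auto
  from dv obtain R where R: "\<And>t. R t > 0" and RD: "\<And>t. (C has_vector_derivative (of_real (R t) * cis t)) (at t)"
    by metis
  define X where "X = (\<lambda>t. Re (C t))"
  define Y where "Y = (\<lambda>t. Im (C t))"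
  have dX: "\<And>t. (X has_real_derivative R t * cos t) (at t)"
    using ReD[OF RD] by (simp add: X_def)
  have dY: "\<And>t. (Y has_real_derivative R t * sin t) (at t)"
    using ImD[OF RD] by (simp add: Y_def)
  have curv: "\<And>t. curvature C t = 1 / R t"
    unfolding curvature_def using vector_derivative_at[OF RD] R
    by (simp add: norm_mult less_imp_le)
  have pin: "pi / real n \<le> pi / 2"
    using assms by (intro divide_left_mono) auto
  have Rmono: "R x \<le> R y" if "0 \<le> x" "x \<le> y" "y \<le> pi / real n" for x y
  proof -
    have "1 / R y \<le> 1 / R x" using mono that curv by auto
    thus ?thesis using R[of x] R[of y] by (simp add: divide_simps)
  qed
  have X0: "X 0 = 0"
  proof -
    have "C 0 \<in> curve_image C" unfolding curve_image_def by auto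
    hence "- cnj (C 0) \<in> (\<lambda>z. - cnj z) ` curve_image C" by blast
    hence "- cnj (C 0) \<in> curve_image C" using T unfolding in_T_def by simp
    then obtain t where t: "t \<in> {0..2*pi}" "C t = - cnj (C 0)" unfolding curve_image_def by auto
    hence YY: "Y t = Y 0" by (simp add: Y_def)
    have "t = 0 \<or> t = 2 * pi"
    proof (rule ccontr)
      assume "\<not> (t = 0 \<or> t = 2 * pi)"
      hence t0: "0 < t" "t < 2 * pi" using t by auto
      show False
      proof (cases "t \<le> pi")
        case True
        obtain z where z: "0 < z" "z < t" "Y t - Y 0 = (t - 0) * (R z * sin z)"
          using MVT2[of 0 t Y "\<lambda>t. R t * sin t"] dY t0 by blast
        have "0 < sin z" using z True by (intro sin_gt_zero) auto
        hence "0 < (t - 0) * (R z * sin z)" using R[of z] t0 by simp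
        moreover have "(t - 0) * (R z * sin z) = 0" using z(3) YY by simp
        ultimately show False by linarith
      next
        case False
        obtain z where z: "t < z" "z < 2 * pi" "Y (2 * pi) - Y t = (2 * pi - t) * (R z * sin z)"
          using MVT2[of t "2 * pi" Y "\<lambda>t. R t * sin t"] dY t0 by blast
        have "sin z < 0" using z False by (intro sin_lt_zero) auto
        hence "(2 * pi - t) * (R z * sin z) < 0" using R[of z] t0
          by (simp add: mult_pos_neg)
        moreover have "Y (2 * pi) = Y 0" using per[of 0] by (simp add: Y_def)
        moreover have "(2 * pi - t) * (R z * sin z) = 0" using z(3) YY calculation(2) by simp
        ultimately show False by linarith
      qed
    qed
    hence "C t = C 0" using per[of 0] by auto
    hence "Re (C 0) = Re (- cnj (C 0))" using t by simp
    thus ?thesis by (simp add: X_def)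
  qed
  have key: "X t \<le> R t * sin t \<and> 0 \<le> X t" if t: "0 \<le> t" "t \<le> pi / real n" for t
  proof (cases "t = 0")
    case True thus ?thesis using X0 by simp
  next
    case False
    hence t0: "0 < t" using t by simp
    have d: "((\<lambda>s. R t * sin s - X s) has_real_derivative (R t * cos s - R s * cos s)) (at s)" for s
      using dX[of s] by (auto intro!: derivative_eq_intros)
    obtain z where z: "0 < z" "z < t" "(R t * sin t - X t) - (R t * sin 0 - X 0) = (t - 0) * (R t * cos z - R z * cos z)"
      using MVT2[of 0 t "\<lambda>s. R t * sin s - X s" "\<lambda>s. R t * cos s - R s * cos s", OF t0 d] by blast
    have cz: "0 \<le> cos z" using z t pin pi_gt_zero by (intro cos_ge_zero; linarith)
    have "R z \<le> R t" using Rmono[of z t] z t by auto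
    hence "0 \<le> (t - 0) * (R t * cos z - R z * cos z)"
      using cz t0 by (simp add: left_diff_distrib[symmetric])
    hence A: "X t \<le> R t * sin t" using z X0 by simp
    obtain w where w: "0 < w" "w < t" "X t - X 0 = (t - 0) * (R w * cos w)"
      using MVT2[of 0 t X "\<lambda>s. R s * cos s", OF t0] dX by blast
    have cw: "0 \<le> cos w" using w t pin pi_gt_zero by (intro cos_ge_zero; linarith)
    have "0 \<le> (t - 0) * (R w * cos w)" using cw t0 R[of w] by simp
    thus ?thesis using A w X0 by simp
  qed
  define P where "P = (\<lambda>u. Y u + X u * cos u / sin u)"
  have NP: "normal_axis_pt C t = P t" if s: "sin t \<noteq> 0" for t
    unfolding normal_axis_pt_def
  proof (rule the_equality)
    show "\<exists>u::real. C t + of_real u * normal_vec t = Complex 0 (P t)"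
      by (rule exI[of _ "- X t / sin t"])
        (use s in \<open>simp add: complex_eq_iff normal_vec_def P_def X_def Y_def field_simps\<close>)
  next
    fix y assume "\<exists>u::real. C t + of_real u * normal_vec t = Complex 0 y"
    then obtain u where u: "C t + of_real u * normal_vec t = Complex 0 y" by blast
    have r1: "Re (C t + of_real u * normal_vec t) = 0" and r2: "Im (C t + of_real u * normal_vec t) = y"
      using u by simp_all
    hence "X t + u * sin t = 0" "Y t - u * cos t = y"
      by (simp_all add: normal_vec_def X_def Y_def)
    hence "u = - X t / sin t" using s by (simp add: field_simps)
    hence "y = Y t - (- X t / sin t) * cos t" using \<open>Y t - u * cos t = y\<close> by simp
    thus "y = P t" by (simp add: P_def)
  qed
  have Pmono: "P x \<le> P y" if xy: "0 < x" "x \<le> y" "y \<le> pi / real n" for x y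
  proof (cases "x = y")
    case True thus ?thesis by simp
  next
    case False
    hence xy': "x < y" using xy by simp
    have "\<And>s. x \<le> s \<Longrightarrow> s \<le> y \<Longrightarrow> (P has_real_derivative (R s * sin s - X s) / (sin s)^2) (at s)"
    proof -
      fix s assume "x \<le> s" "s \<le> y"
      hence "0 < sin s" using xy pin pi_gt_zero \<open>x \<le> s\<close> \<open>s \<le> y\<close> by (intro sin_gt_zero; linarith)
      thus "(P has_real_derivative (R s * sin s - X s) / (sin s)^2) (at s)"
        unfolding P_def by (intro P_deriv dX dY) simp
    qed
    then obtain z where z: "x < z" "z < y" "P y - P x = (y - x) * ((R z * sin z - X z) / (sin z)^2)"
      using MVT2[OF xy', of P "\<lambda>s. (R s * sin s - X s) / (sin s)^2"] by blast
    have "X z \<le> R z * sin z" using key[of z] z xy by auto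
    hence "0 \<le> (y - x) * ((R z * sin z - X z) / (sin z)^2)" using xy' by simp
    thus ?thesis using z by simp
  qed
  have hX: "((\<lambda>y. X y / y) \<longlongrightarrow> R 0) (at 0)"
    using dX[of 0] X0 unfolding has_field_derivative_iff by simp
  have hS: "((\<lambda>y::real. sin y / y) \<longlongrightarrow> 1) (at 0)"
    using DERIV_sin[of "0::real"] unfolding has_field_derivative_iff by simp
  have hY: "(Y \<longlongrightarrow> Y 0) (at 0)" using DERIV_isCont[OF dY[of 0]] unfolding isCont_def .
  have hC: "(cos \<longlongrightarrow> 1) (at (0::real))" using isCont_cos[of 0] unfolding isCont_def by simp
  have "((\<lambda>y. Y y + (X y / y) * cos y / (sin y / y)) \<longlongrightarrow> Y 0 + R 0 * 1 / 1) (at 0)"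
    by (intro tendsto_add tendsto_mult tendsto_divide hX hS hY hC) simp
  hence "((\<lambda>y. Y y + (X y / y) * cos y / (sin y / y)) \<longlongrightarrow> Y 0 + R 0) (at 0)"
    by simp
  hence L1: "((\<lambda>y. Y y + (X y / y) * cos y / (sin y / y)) \<longlongrightarrow> Y 0 + R 0) (at_right 0)"
    using filterlim_at_split by blast
  have ev: "\<forall>\<^sub>F y in at_right 0. y \<in> {0<..<1::real}" by (rule eventually_at_right_real) simp
  have E1: "\<forall>\<^sub>F y in at_right 0. Y y + (X y / y) * cos y / (sin y / y) = P y"
    using ev by eventually_elim (auto simp: P_def)
  have Plim: "(P \<longlongrightarrow> Y 0 + R 0) (at_right 0)" using L1 E1 by (rule Lim_transform_eventually)
  have E2: "\<forall>\<^sub>F y in at_right 0. P y = normal_axis_pt C y"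
    using ev
  proof eventually_elim
    case (elim y)
    hence "0 < sin y" using pi_gt3 by (intro sin_gt_zero) auto
    thus ?case using NP by simp
  qed
  have "(normal_axis_pt C \<longlongrightarrow> Y 0 + R 0) (at_right 0)" using Plim E2 by (rule Lim_transform_eventually)
  hence Pi0: "Pi_fun C 0 = Y 0 + R 0" unfolding Pi_fun_def
    using tendsto_Lim[OF trivial_limit_at_right_real] by simp
  have Pipos: "Pi_fun C t = P t" if "0 < t" "t \<le> pi / real n" for t
  proof -
    have "0 < sin t" using that pin pi_gt_zero by (intro sin_gt_zero; linarith)
    thus ?thesis using NP that unfolding Pi_fun_def by simp
  qed
  have LeP: "Y 0 + R 0 \<le> P y" if "0 < y" "y \<le> pi / real n" for y
  proof (rule tendsto_upperbound[OF Plim _ trivial_limit_at_right_real])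
    show "\<forall>\<^sub>F x in at_right 0. P x \<le> P y"
      using eventually_at_right_real[OF \<open>0 < y\<close>]
      by eventually_elim (use that in \<open>auto intro!: Pmono\<close>)
  qed
  show "C \<in> S_n n"
    unfolding S_n_def
  proof (intro CollectI conjI cC T ballI impI)
    fix x y assume x: "x \<in> {0..pi / real n}" and y: "y \<in> {0..pi / real n}" and xy: "x \<le> y"
    show "Pi_fun C x \<le> Pi_fun C y"
    proof (cases "x = 0")
      case True
      show ?thesis
      proof (cases "y = 0")
        case True thus ?thesis using \<open>x = 0\<close> by simp
      next
        case False
        thus ?thesis using \<open>x = 0\<close> Pi0 Pipos[of y] LeP[of y] y by auto
      qed
    next
      case False
      thus ?thesis using Pipos[of x] Pipos[of y] Pmono[of x y] x y xy by auto
    qed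
  qed
qed

end
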